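(* Let $\Omega=(0,1)^2$, $N\ge2$, $h=1/N$, with grid points $(ih,jh)$, $0\le i,j\le N$; vectors $Z\in\mathbb{R}^{(N+1)^2}$ are indexed by grid points, $Z_I$ denotes the components at grid points in $\Omega$ and $Z_\partial$ those on $\partial\Omega$. Let $\mathcal{L}_h$ be the five-point operator $(\mathcal{L}_hZ)_{i,j}=-h^{-2}(z_{i-1,j}+z_{i+1,j}-4z_{i,j}+z_{i,j-1}+z_{i,j+1})$ at interior grid points. Let $\Omega=\Omega_1\cup\Omega_2$ be an overlapping decomposition into subdomains whose boundaries lie on grid lines; for $i=1,2$ let $Z_i,Z_{i,I},Z_{i,\partial}$ be the components of $Z$ at grid points of $\overline{\Omega_i}$, $\Omega_i$, $\partial\Omega_i$, and $\mathcal{L}_h^{(i)}$ the five-point operator at grid points of $\Omega_i$ acting on vectors indexed by grid points of $\overline{\Omega_i}$. Let $\alpha>0$, $F,Y_d\in\mathbb{R}^{(N+1)^2}$, and let $(Y,P)$ solve $$\mathcal{L}_hY=F_I-\alpha^{-1}h^{-2}P_I,\ Y_\partial=0;\qquad \mathcal{L}_h(h^{-2}P)=Y_I-Y_{d,I},\ P_\partial=0.$$ Given $Y^{(0)},P^{(0)}$ with $Y^{(0)}_\partial=P^{(0)}_\partial=0$, for $k=0,1,2,\dots$ and $i=1,2$ (in the order $i=1$ then $i=2$) define $Y^{(2k+i)},P^{(2k+i)}$ by $$\mathcal{L}_h^{(i)}Y^{(2k+i)}_i=F_{i,I}-\alpha^{-1}h^{-2}P^{(2k+i)}_{i,I},\qquad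 \mathcal{L}_h^{(i)}(h^{-2}P^{(2k+i)}_i)=Y^{(2k+i)}_{i,I}-Y_{d,i,I},$$ $Y^{(2k+i)}_{i,\partial}=Y^{(2k+i-1)}_{i,\partial}$, $P^{(2k+i)}_{i,\partial}=P^{(2k+i-1)}_{i,\partial}$, and $Y^{(2k+i)},P^{(2k+i)}$ equal to $Y^{(2k+i-1)},P^{(2k+i-1)}$ at all grid points not in $\Omega_i$. Define $E^{(j)}=(Y-Y^{(j)})^2+\alpha^{-1}h^{-4}(P-P^{(j)})^2$ (componentwise squares). Suppose the Schwarz alternating method for $\mathcal{L}_hW=0$, $W_\partial=0$ (namely $\mathcal{L}_h^{(i)}W^{(2k+i)}_i=0$, $W^{(2k+i)}_{i,\partial}=W^{(2k+i-1)}_{i,\partial}$, $W^{(2k+i)}=W^{(2k+i-1)}$ at grid points not in $\Omega_i$) is convergent with rate $\rho_{e,d}\in(0,1)$ under the maximum norm, i.e. $\max\{W^{(2k)}\}\le\rho_{e,d}\max\{W^{(2(k-1))}\}$ for $k\ge1$ and any initial guess. Then for $k=1,2,\dots$, $$\sum_{s=1}^{(N+1)^2}h^2\,(E^{(2k)})_s\le C\rho_{e,d}^k\max\{E^{(0)}\},$$ where $C>0$ is a constant independent of $h$, $\rho_{e,d}$ and $\alpha$.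
   Context: The $(Y,P)$ system is the discrete first-order optimality system (control eliminated) of the five-point finite difference discretization of minimizing $\frac12\|y-y_d\|_{L^2}^2+\frac\alpha2\|u\|_{L^2}^2$ subject to $-\Delta y=f+u$ in $(0,1)^2$, $y=0$ on the boundary. $\max\{\cdot\}$ denotes the maximum over all components. *)

theory Defs
  imports "HOL-Analysis.Analysis"
begin

text \<open>Grid functions: a vector Z in R^((N+1)^2) is a function nat => nat => real,
  component (a,b) corresponding to the grid point (a h, b h), 0 <= a,b <= N, h = 1/N.\<close>

type_synonym gridfun = "nat \<Rightarrow> nat \<Rightarrow> real"

definition grid_pts :: "nat \<Rightarrow> (nat \<times> nat) set" where
  "grid_pts N = {(a,b). a \<le> N \<and> b \<le> N}"

definition interior_pts :: "nat \<Rightarrow> (nat \<times> nat) set" where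
  "interior_pts N = {(a,b). 1 \<le> a \<and> a < N \<and> 1 \<le> b \<and> b < N}"

definition boundary_pts :: "nat \<Rightarrow> (nat \<times> nat) set" where
  "boundary_pts N = grid_pts N - interior_pts N"

definition unit_sq :: "(real \<times> real) set" where
  "unit_sq = {(x,y). 0 < x \<and> x < 1 \<and> 0 < y \<and> y < 1}"

definition sub_pts :: "nat \<Rightarrow> (real \<times> real) set \<Rightarrow> (nat \<times> nat) set" where
  "sub_pts N D = {(a,b). a \<le> N \<and> b \<le> N \<and> (real a / real N, real b / real N) \<in> D}"

text \<open>Five-point operator (h = 1/N, so h^-2 = N^2), evaluated at an interior point (a,b).\<close>
definition lap5 :: "nat \<Rightarrow> gridfun \<Rightarrow> nat \<Rightarrow> nat \<Rightarrow> real" where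
  "lap5 N Z a b = - ((real N)^2 * (Z (a-1) b + Z (a+1) b - 4 * Z a b + Z a (b-1) + Z a (b+1)))"

definition gmax :: "nat \<Rightarrow> gridfun \<Rightarrow> real" where
  "gmax N Z = Max ((\<lambda>(a,b). Z a b) ` grid_pts N)"

definition gmaxnorm :: "nat \<Rightarrow> gridfun \<Rightarrow> real" where
  "gmaxnorm N Z = Max ((\<lambda>(a,b). \<bar>Z a b\<bar>) ` grid_pts N)"

definition admissible_decomp :: "nat \<Rightarrow> (real \<times> real) set \<Rightarrow> (real \<times> real) set \<Rightarrow> bool" where
  "admissible_decomp N O1 O2 \<longleftrightarrow>
     open O1 \<and> open O2 \<and> connected O1 \<and> connected O2 \<and>
     O1 \<union> O2 = unit_sq \<and> O1 \<inter> O2 \<noteq> {} \<and>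
     (\<forall>p \<in> frontier O1 \<union> frontier O2.
        real N * fst p \<in> \<int> \<or> real N * snd p \<in> \<int>)"

text \<open>Subdomain active at step m >= 1: m = 2k+i, i = 1 for odd m, i = 2 for even m.\<close>
definition active_sub :: "nat \<Rightarrow> (real \<times> real) set \<Rightarrow> (real \<times> real) set \<Rightarrow> nat \<Rightarrow> (nat \<times> nat) set" where
  "active_sub N O1 O2 m = (if odd m then sub_pts N O1 else sub_pts N O2)"

definition schwarz_laplace ::
  "nat \<Rightarrow> (real \<times> real) set \<Rightarrow> (real \<times> real) set \<Rightarrow> (nat \<Rightarrow> gridfun) \<Rightarrow> bool" where
  "schwarz_laplace N O1 O2 W \<longleftrightarrow>
     (\<forall>(a,b) \<in> boundary_pts N. W 0 a b = 0) \<and>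
     (\<forall>m \<ge> 1.
        (\<forall>(a,b) \<in> active_sub N O1 O2 m. lap5 N (W m) a b = 0) \<and>
        (\<forall>(a,b) \<in> grid_pts N - active_sub N O1 O2 m. W m a b = W (m-1) a b))"

definition optsys :: "nat \<Rightarrow> real \<Rightarrow> gridfun \<Rightarrow> gridfun \<Rightarrow> gridfun \<Rightarrow> gridfun \<Rightarrow> bool" where
  "optsys N \<alpha> F Yd Y P \<longleftrightarrow>
     (\<forall>(a,b) \<in> interior_pts N.
        lap5 N Y a b = F a b - (1/\<alpha>) * (real N)^2 * P a b \<and>
        lap5 N (\<lambda>i j. (real N)^2 * P i j) a b = Y a b - Yd a b) \<and>
     (\<forall>(a,b) \<in> boundary_pts N. Y a b = 0 \<and> P a b = 0)"

definition schwarz_opt ::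
  "nat \<Rightarrow> (real \<times> real) set \<Rightarrow> (real \<times> real) set \<Rightarrow> real \<Rightarrow> gridfun \<Rightarrow> gridfun
     \<Rightarrow> (nat \<Rightarrow> gridfun) \<Rightarrow> (nat \<Rightarrow> gridfun) \<Rightarrow> bool" where
  "schwarz_opt N O1 O2 \<alpha> F Yd Ys Ps \<longleftrightarrow>
     (\<forall>(a,b) \<in> boundary_pts N. Ys 0 a b = 0 \<and> Ps 0 a b = 0) \<and>
     (\<forall>m \<ge> 1.
        (\<forall>(a,b) \<in> active_sub N O1 O2 m.
           lap5 N (Ys m) a b = F a b - (1/\<alpha>) * (real N)^2 * Ps m a b \<and>
           lap5 N (\<lambda>i j. (real N)^2 * Ps m i j) a b = Ys m a b - Yd a b) \<and>
        (\<forall>(a,b) \<in> grid_pts N - active_sub N O1 O2 m.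
           Ys m a b = Ys (m-1) a b \<and> Ps m a b = Ps (m-1) a b))"

definition err :: "nat \<Rightarrow> real \<Rightarrow> gridfun \<Rightarrow> gridfun \<Rightarrow> gridfun \<Rightarrow> gridfun \<Rightarrow> gridfun" where
  "err N \<alpha> Y P Yj Pj = (\<lambda>a b. (Y a b - Yj a b)^2 + (1/\<alpha>) * (real N)^4 * (P a b - Pj a b)^2)"

end

theory Submission imports Defs "HOL-Library.Function_Algebras" begin

lemma sum_fun_eval: "(\<Sum>p\<in>A. (g p :: 'x \<Rightarrow> real)) x = (\<Sum>p\<in>A. g p x)"
  by (induction A rule: infinite_finite_induct) auto

lemma fin_inj_surj:
  fixes T :: "('x \<Rightarrow> real) \<Rightarrow> ('x \<Rightarrow> real)" and D :: "'x set"
  assumes fin: "finite D"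
    and add: "\<And>f g. T (f + g) = T f + T g"
    and scl: "\<And>c f. T (\<lambda>x. c * f x) = (\<lambda>x. c * T f x)"
    and inv: "\<And>f. (\<forall>x. x \<notin> D \<longrightarrow> f x = 0) \<Longrightarrow> (\<forall>x. x \<notin> D \<longrightarrow> T f x = 0)"
    and inj: "\<And>f. (\<forall>x. x \<notin> D \<longrightarrow> f x = 0) \<Longrightarrow> T f = 0 \<Longrightarrow> f = 0"
    and g: "\<forall>x. x \<notin> D \<longrightarrow> g x = 0"
  shows "\<exists>f. (\<forall>x. x \<notin> D \<longrightarrow> f x = 0) \<and> T f = g"
proof -
  define sc where "sc = (\<lambda>(c::real) (f::'x\<Rightarrow>real). (\<lambda>x. c * f x))"
  interpret V: vector_space sc
    by unfold_locales (auto simp: sc_def fun_eq_iff algebra_simps)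
  interpret H: module_hom sc sc T
    by unfold_locales (auto simp: sc_def add scl fun_eq_iff algebra_simps)
  define S where "S = {f::'x\<Rightarrow>real. \<forall>x. x \<notin> D \<longrightarrow> f x = 0}"
  define B where "B = (\<lambda>p. \<lambda>x. if x = p then (1::real) else 0) ` D"
  have finB: "finite B" using fin by (simp add: B_def)
  have subS: "V.subspace S"
    by (rule V.subspaceI) (auto simp: S_def sc_def)
  have BS: "B \<subseteq> S" unfolding B_def S_def by auto
  have SB: "S \<subseteq> V.span B"
  proof
    fix f assume "f \<in> S"
    then have "f = (\<Sum>p\<in>D. sc (f p) (\<lambda>x. if x = p then 1 else 0))"
      using fin by (auto simp: fun_eq_iff sum_fun_eval sc_def S_def if_distrib cong: if_cong)
    also have "\<dots> \<in> V.span B"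
      by (intro V.span_sum V.span_scale V.span_base) (auto simp: B_def)
    finally show "f \<in> V.span B" .
  qed
  have spanB: "V.span B = S"
    using V.span_subspace[OF BS SB subS] .
  obtain B' where B': "B' \<subseteq> B" "V.independent B'" "B \<subseteq> V.span B'"
    using V.maximal_independent_subset[of B] by blast
  have finB': "finite B'" using B'(1) finB finite_subset by blast
  have spanB': "V.span B' = S"
    using B' spanB by (metis V.span_mono V.span_span subset_antisym)
  have injS: "inj_on T S"
  proof (rule inj_onI)
    fix f1 f2 assume "f1 \<in> S" "f2 \<in> S" "T f1 = T f2"
    then have "T (f1 - f2) = 0" using add[of "f1 - f2" f2] by simp
    moreover have "\<forall>x. x \<notin> D \<longrightarrow> (f1 - f2) x = 0" using \<open>f1 \<in> S\<close> \<open>f2 \<in> S\<close> by (auto simp: S_def)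
    ultimately have "f1 - f2 = 0" using inj by blast
    then show "f1 = f2" by simp
  qed
  have indT: "V.independent (T ` B')"
    using H.independent_injective_image[OF B'(2)] injS spanB' by simp
  have cardT: "card (T ` B') = card B'"
    using injS spanB' B' by (metis V.span_superset card_image inj_on_subset)
  have TS: "T ` S \<subseteq> S" using inv by (auto simp: S_def)
  have "g \<in> V.span (T ` B')"
  proof (rule ccontr)
    assume ng: "g \<notin> V.span (T ` B')"
    then have "V.independent (insert g (T ` B'))"
      using V.independent_insertI indT by blast
    moreover have "insert g (T ` B') \<subseteq> V.span B'"
    proof -
      have "T ` B' \<subseteq> S" using TS spanB' V.span_superset[of B'] by blast
      moreover have "g \<in> S" using g by (simp add: S_def)
      ultimately show ?thesis using spanB' by blast
    qed
    ultimately have "card (insert g (T ` B')) \<le> card B'"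
      using V.independent_span_bound[OF finB'] by blast
    moreover have "g \<notin> T ` B'" using ng V.span_superset by blast
    ultimately show False using cardT finB' by simp
  qed
  then have "g \<in> T ` V.span B'" using H.span_image by simp
  then show ?thesis using spanB' by (auto simp: S_def)
qed

lemma lap5_add: "lap5 N (\<lambda>i j. f i j + g i j) a b = lap5 N f a b + lap5 N g a b"
  unfolding lap5_def by (simp add: algebra_simps)
lemma lap5_diff: "lap5 N (\<lambda>i j. f i j - g i j) a b = lap5 N f a b - lap5 N g a b"
  unfolding lap5_def by (simp add: algebra_simps)
lemma lap5_scale: "lap5 N (\<lambda>i j. c * f i j) a b = c * lap5 N f a b"
  unfolding lap5_def by (simp add: algebra_simps)
lemma lap5_neg: "lap5 N (\<lambda>i j. - f i j) a b = - lap5 N f a b"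
  unfolding lap5_def by (simp add: algebra_simps)

lemma lap5_sq: "lap5 N (\<lambda>i j. (z i j)^2) a b \<le> 2 * z a b * lap5 N z a b"
proof -
  have "2 * z a b * lap5 N z a b - lap5 N (\<lambda>i j. (z i j)^2) a b =
     (real N)^2 * ((z (a-1) b - z a b)^2 + (z (a+1) b - z a b)^2 + (z a (b-1) - z a b)^2 + (z a (b+1) - z a b)^2)"
    unfolding lap5_def by (simp add: power2_eq_square algebra_simps)
  also have "\<dots> \<ge> 0" by simp
  finally show ?thesis by simp
qed

lemma subharm:
  assumes al: "\<alpha> > 0"
    and y1: "lap5 N Y a b = F a b - (1/\<alpha>) * (real N)^2 * P a b"
    and p1: "lap5 N (\<lambda>i j. (real N)^2 * P i j) a b = Y a b - Yd a b"
    and y2: "lap5 N Ys a b = F a b - (1/\<alpha>) * (real N)^2 * Ps a b"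
    and p2: "lap5 N (\<lambda>i j. (real N)^2 * Ps i j) a b = Ys a b - Yd a b"
  shows "lap5 N (err N \<alpha> Y P Ys Ps) a b \<le> 0"
proof -
  define e where "e = (\<lambda>i j. Y i j - Ys i j)"
  define q where "q = (\<lambda>i j. (real N)^2 * P i j - (real N)^2 * Ps i j)"
  have E: "err N \<alpha> Y P Ys Ps = (\<lambda>i j. (e i j)^2 + (1/\<alpha>) * (q i j)^2)"
  proof -
    have sq: "(c*x - c*y)^2 = c^2*(x-y)^2" for c x y :: real by (simp add: power2_eq_square algebra_simps)
    have n4: "((real N)^2)^2 = (real N)^4" by (simp flip: power_mult)
    show ?thesis unfolding err_def e_def q_def by (auto simp: fun_eq_iff sq n4)
  qed
  have le: "lap5 N e a b = - (1/\<alpha>) * q a b"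
    unfolding e_def q_def lap5_diff y1 y2 by (simp add: algebra_simps)
  have lq: "lap5 N q a b = e a b"
    unfolding e_def q_def lap5_diff[of N "\<lambda>i j. (real N)^2 * P i j" "\<lambda>i j. (real N)^2 * Ps i j"] p1 p2 by simp
  have "lap5 N (err N \<alpha> Y P Ys Ps) a b = lap5 N (\<lambda>i j. (e i j)^2) a b + (1/\<alpha>) * lap5 N (\<lambda>i j. (q i j)^2) a b"
    unfolding E lap5_add lap5_scale ..
  also have "\<dots> \<le> 2 * e a b * lap5 N e a b + (1/\<alpha>) * (2 * q a b * lap5 N q a b)"
    using lap5_sq[of N e a b] lap5_sq[of N q a b] al
    by (intro add_mono mult_left_mono) auto
  also have "\<dots> = 0" unfolding le lq by (simp add: algebra_simps)
  finally show ?thesis .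
qed

lemma maxprin:
  assumes D: "D \<subseteq> interior_pts N"
    and L: "\<forall>(a,b)\<in>D. lap5 N v a b \<le> 0"
    and B: "\<forall>(a,b)\<in>grid_pts N - D. v a b \<le> 0"
  shows "\<forall>(a,b)\<in>grid_pts N. v a b \<le> 0"
proof (rule ccontr)
  assume "\<not> ?thesis"
  then obtain a1 b1 where p1: "(a1,b1) \<in> grid_pts N" "v a1 b1 > 0" by auto
  have fin: "finite (grid_pts N)"
    by (rule finite_subset[of _ "{..N} \<times> {..N}"]) (auto simp: grid_pts_def)
  define M where "M = Max ((\<lambda>(a,b). v a b) ` grid_pts N)"
  have Mge: "\<And>a b. (a,b) \<in> grid_pts N \<Longrightarrow> v a b \<le> M"
    unfolding M_def using fin by (intro Max_ge) auto
  have "M \<in> (\<lambda>(a,b). v a b) ` grid_pts N"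
    unfolding M_def using fin p1 by (intro Max_in) auto
  then obtain pp where pp: "pp \<in> grid_pts N" "M = (\<lambda>(a,b). v a b) pp" by blast
  obtain a2 b2 where "pp = (a2,b2)" by (cases pp)
  note eqp = \<open>pp = (a2,b2)\<close>
  have p2a: "(a2,b2) \<in> grid_pts N" using pp(1) unfolding eqp .
  have "M = v a2 b2" using pp(2) unfolding eqp by (simp only: case_prod_conv)
  then have p2b: "v a2 b2 = M" by (rule sym)
  note p2 = p2a p2b
  define a0 where "a0 = (LEAST a. \<exists>b. (a,b) \<in> grid_pts N \<and> v a b = M)"
  have "\<exists>b. (a0,b) \<in> grid_pts N \<and> v a0 b = M"
  proof -
    have ex: "\<exists>a b. (a,b) \<in> grid_pts N \<and> v a b = M" using p2 by blast
    show ?thesis unfolding a0_def by (rule LeastI_ex[OF ex])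
  qed
  then obtain b0 where p0: "(a0,b0) \<in> grid_pts N" "v a0 b0 = M" by blast
  have Mpos: "M > 0" using Mge[OF p1(1)] p1(2) by simp
  have inD: "(a0,b0) \<in> D"
  proof (rule ccontr)
    assume "(a0,b0) \<notin> D"
    then have "v a0 b0 \<le> 0" using B p0(1) by auto
    then show False using p0(2) Mpos by simp
  qed
  then have int: "1 \<le> a0" "a0 < N" "1 \<le> b0" "b0 < N" using D by (auto simp: interior_pts_def)
  have g1: "(a0-1,b0) \<in> grid_pts N" "(a0+1,b0) \<in> grid_pts N" "(a0,b0-1) \<in> grid_pts N" "(a0,b0+1) \<in> grid_pts N"
    using int by (auto simp: grid_pts_def)
  have n1: "v (a0-1) b0 \<le> M" "v (a0+1) b0 \<le> M" "v a0 (b0-1) \<le> M" "v a0 (b0+1) \<le> M"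
    using Mge[OF g1(1)] Mge[OF g1(2)] Mge[OF g1(3)] Mge[OF g1(4)] by auto
  define s where "s = v (a0-1) b0 + v (a0+1) b0 - 4 * v a0 b0 + v a0 (b0-1) + v a0 (b0+1)"
  have "lap5 N v a0 b0 \<le> 0" using L inD by auto
  then have "(real N)^2 * s \<ge> 0" unfolding lap5_def s_def by linarith
  moreover have Npos: "(real N)^2 > 0" using int by simp
  ultimately have "s \<ge> 0" by (simp add: zero_le_mult_iff)
  then have "v (a0-1) b0 + v (a0+1) b0 - 4 * v a0 b0 + v a0 (b0-1) + v a0 (b0+1) \<ge> 0"
    unfolding s_def .
  then have "v (a0-1) b0 = M" using n1 p0 by linarith
  then have "\<exists>b. (a0-1,b) \<in> grid_pts N \<and> v (a0-1) b = M" using g1(1) by blast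
  then have "a0 \<le> a0 - 1" unfolding a0_def by (rule Least_le)
  then show False using int by simp
qed

lemma harm_ext:
  fixes g :: gridfun
  assumes D: "D \<subseteq> interior_pts N"
  shows "\<exists>u. (\<forall>(a,b)\<in>D. lap5 N u a b = 0) \<and> (\<forall>a b. (a,b) \<notin> D \<longrightarrow> u a b = g a b)"
proof -
  have finD: "finite D"
    by (rule finite_subset[OF D], rule finite_subset[of _ "{..N} \<times> {..N}"]) (auto simp: interior_pts_def)
  define T where "T = (\<lambda>(f::nat\<times>nat\<Rightarrow>real). \<lambda>(a,b). if (a,b) \<in> D then lap5 N (curry f) a b else f (a,b))"
  define g0 where "g0 = (\<lambda>a b. if (a,b) \<in> D then 0 else g a b)"
  define g' where "g' = (\<lambda>(a,b). if (a,b) \<in> D then - lap5 N g0 a b else (0::real))"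
  have "\<exists>f. (\<forall>x. x \<notin> D \<longrightarrow> f x = 0) \<and> T f = g'"
  proof (rule fin_inj_surj[OF finD])
    show "T (f + g) = T f + T g" for f g
      unfolding T_def curry_def by (auto simp: fun_eq_iff lap5_add[symmetric])
    show "T (\<lambda>x. c * f x) = (\<lambda>x. c * T f x)" for c f
      unfolding T_def curry_def by (auto simp: fun_eq_iff lap5_scale[symmetric])
    show "\<forall>x. x \<notin> D \<longrightarrow> T f x = 0" if "\<forall>x. x \<notin> D \<longrightarrow> f x = 0" for f
      using that unfolding T_def by auto
    show "\<forall>x. x \<notin> D \<longrightarrow> g' x = 0" unfolding g'_def by auto
    show "f = 0" if f0: "\<forall>x. x \<notin> D \<longrightarrow> f x = 0" and Tf: "T f = 0" for f
    proof -
      have L0: "lap5 N (curry f) a b = 0" if "(a,b) \<in> D" for a b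
        using fun_cong[OF Tf, of "(a,b)"] that unfolding T_def by simp
      have "\<forall>(a,b)\<in>grid_pts N. curry f a b \<le> 0"
        by (rule maxprin[OF D]) (use L0 f0 in \<open>auto simp: curry_def\<close>)
      moreover have "\<forall>(a,b)\<in>grid_pts N. (\<lambda>i j. - curry f i j) a b \<le> 0"
        by (rule maxprin[OF D]) (use L0 f0 in \<open>auto simp: lap5_neg curry_def\<close>)
      moreover have "D \<subseteq> grid_pts N" using D by (auto simp: interior_pts_def grid_pts_def)
      ultimately have "\<forall>x\<in>D. f x = 0" by fastforce
      then show "f = 0" using f0 by (auto simp: fun_eq_iff)
    qed
  qed
  then obtain f where f: "\<forall>x. x \<notin> D \<longrightarrow> f x = 0" "T f = g'" by blast
  define u where "u = (\<lambda>a b. g0 a b + curry f a b)"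
  have "lap5 N u a b = 0" if "(a,b) \<in> D" for a b
  proof -
    have "T f (a,b) = g' (a,b)" using f(2) by simp
    then have "lap5 N (curry f) a b = - lap5 N g0 a b" using that unfolding T_def g'_def by simp
    then show ?thesis unfolding u_def lap5_add[of N g0 "curry f"] by simp
  qed
  moreover have "u a b = g a b" if "(a,b) \<notin> D" for a b
    using that f(1) unfolding u_def g0_def by simp
  ultimately show ?thesis by blast
qed


lemma sub_interior:
  assumes "Om \<subseteq> unit_sq" "N \<ge> 1"
  shows "sub_pts N Om \<subseteq> interior_pts N"
proof
  fix p assume "p \<in> sub_pts N Om"
  then obtain a b where p: "p = (a,b)" "a \<le> N" "b \<le> N" "(real a / real N, real b / real N) \<in> unit_sq"
    using assms(1) unfolding sub_pts_def by auto
  have Np: "real N > 0" using assms(2) by simp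
  have "0 < real a / real N" "real a / real N < 1" "0 < real b / real N" "real b / real N < 1"
    using p(4) unfolding unit_sq_def by auto
  then have "0 < real a" "real a < real N" "0 < real b" "real b < real N"
    using Np by (auto simp: divide_less_eq zero_less_divide_iff)
  then show "p \<in> interior_pts N" using p unfolding interior_pts_def by auto
qed

lemma grid_card: "card (grid_pts N) = (N+1)^2"
proof -
  have "grid_pts N = {..N} \<times> {..N}" by (auto simp: grid_pts_def)
  then show ?thesis by (simp add: card_cartesian_product power2_eq_square)
qed

lemma grid_fin: "finite (grid_pts N)"
  by (rule finite_subset[of _ "{..N} \<times> {..N}"]) (auto simp: grid_pts_def)

lemma le_gmaxnorm: "(a,b) \<in> grid_pts N \<Longrightarrow> \<bar>Z a b\<bar> \<le> gmaxnorm N Z"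
  unfolding gmaxnorm_def using grid_fin by (intro Max_ge) force+

lemma main:
  assumes N: "N \<ge> 2" and dec: "admissible_decomp N O1 O2" and al: "\<alpha> > 0"
    and opt: "optsys N \<alpha> F Yd Y P" and sch: "schwarz_opt N O1 O2 \<alpha> F Yd Ys Ps"
    and rho: "0 < \<rho>"
    and conv: "\<forall>W. schwarz_laplace N O1 O2 W \<longrightarrow>
        (\<forall>k\<ge>1. gmaxnorm N (W (2*k)) \<le> \<rho> * gmaxnorm N (W (2*(k-1))))"
    and k: "k \<ge> 1"
  shows "(\<Sum>(a,b)\<in>grid_pts N. (1 / real N)^2 * err N \<alpha> Y P (Ys (2*k)) (Ps (2*k)) a b)
              \<le> 4 * \<rho>^k * gmax N (err N \<alpha> Y P (Ys 0) (Ps 0))"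
proof -
  have act: "active_sub N O1 O2 m \<subseteq> interior_pts N" for m
  proof -
    have "O1 \<subseteq> unit_sq" "O2 \<subseteq> unit_sq" using dec unfolding admissible_decomp_def by auto
    then show ?thesis unfolding active_sub_def using sub_interior N by auto
  qed
  have intgrid: "interior_pts N \<subseteq> grid_pts N" by (auto simp: interior_pts_def grid_pts_def)
  define E where "E = (\<lambda>m. err N \<alpha> Y P (Ys m) (Ps m))"
  have Enn: "E m a b \<ge> 0" for m a b unfolding E_def err_def using al by simp
  define H where "H = (\<lambda>D (g::gridfun). SOME u. (\<forall>(a,b)\<in>D. lap5 N u a b = 0) \<and> (\<forall>a b. (a,b) \<notin> D \<longrightarrow> u a b = g a b))"
  have Hp: "(\<forall>(a,b)\<in>D. lap5 N (H D g) a b = 0) \<and> (\<forall>a b. (a,b) \<notin> D \<longrightarrow> H D g a b = g a b)"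
    if "D \<subseteq> interior_pts N" for D g
    unfolding H_def by (fact someI_ex[OF harm_ext[OF that]])
  define W where "W = rec_nat (E 0) (\<lambda>m w. H (active_sub N O1 O2 (Suc m)) w)"
  have W0: "W 0 = E 0" unfolding W_def by simp
  have WS: "W (Suc m) = H (active_sub N O1 O2 (Suc m)) (W m)" for m unfolding W_def by simp
  have bd: "\<forall>(a,b)\<in>boundary_pts N. Ys 0 a b = 0 \<and> Ps 0 a b = 0" "\<forall>(a,b)\<in>boundary_pts N. Y a b = 0 \<and> P a b = 0"
    using sch opt unfolding schwarz_opt_def optsys_def by auto
  have E0b: "\<forall>(a,b)\<in>boundary_pts N. E 0 a b = 0"
  proof clarify
    fix a b assume ab: "(a,b) \<in> boundary_pts N"
    then have "Ys 0 a b = 0" "Ps 0 a b = 0" "Y a b = 0" "P a b = 0" using bd by auto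
    then show "E 0 a b = 0" unfolding E_def err_def by simp
  qed
  have SL: "schwarz_laplace N O1 O2 W"
    unfolding schwarz_laplace_def
  proof (rule conjI)
    show "\<forall>(a,b)\<in>boundary_pts N. W 0 a b = 0" using E0b W0 by simp
  next
    show "\<forall>m\<ge>1. (\<forall>(a,b)\<in>active_sub N O1 O2 m. lap5 N (W m) a b = 0) \<and>
          (\<forall>(a,b)\<in>grid_pts N - active_sub N O1 O2 m. W m a b = W (m - 1) a b)"
  proof (intro allI impI)
    fix m :: nat assume "1 \<le> m"
    then obtain m' where m: "m = Suc m'" by (cases m) auto
    have "(\<forall>(a,b)\<in>active_sub N O1 O2 m. lap5 N (W m) a b = 0) \<and> (\<forall>a b. (a,b) \<notin> active_sub N O1 O2 m \<longrightarrow> W m a b = W m' a b)"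
      unfolding m WS by (rule Hp[OF act])
    then show "(\<forall>(a,b)\<in>active_sub N O1 O2 m. lap5 N (W m) a b = 0) \<and>
          (\<forall>(a,b)\<in>grid_pts N - active_sub N O1 O2 m. W m a b = W (m - 1) a b)"
      using m by auto
  qed
  qed
  have rate: "gmaxnorm N (W (2*j)) \<le> \<rho>^j * gmaxnorm N (W 0)" for j
  proof (induction j)
    case 0 then show ?case by simp
  next
    case (Suc j)
    have "gmaxnorm N (W (2*Suc j)) \<le> \<rho> * gmaxnorm N (W (2*(Suc j - 1)))"
      using conv SL by (metis le_add1 plus_1_eq_Suc)
    also have "\<dots> \<le> \<rho> * (\<rho>^j * gmaxnorm N (W 0))"
      using Suc rho by (intro mult_left_mono) auto
    finally show ?case by simp
  qed
  have cmp: "\<forall>(a,b)\<in>grid_pts N. E m a b \<le> W m a b" for m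
  proof (induction m)
    case 0 then show ?case using W0 by simp
  next
    case (Suc m)
    let ?D = "active_sub N O1 O2 (Suc m)"
    have Hm: "(\<forall>(a,b)\<in>?D. lap5 N (W (Suc m)) a b = 0) \<and> (\<forall>a b. (a,b) \<notin> ?D \<longrightarrow> W (Suc m) a b = W m a b)"
      unfolding WS by (rule Hp[OF act])
    have schm: "(\<forall>(a,b) \<in> ?D.
           lap5 N (Ys (Suc m)) a b = F a b - (1/\<alpha>) * (real N)^2 * Ps (Suc m) a b \<and>
           lap5 N (\<lambda>i j. (real N)^2 * Ps (Suc m) i j) a b = Ys (Suc m) a b - Yd a b) \<and>
        (\<forall>(a,b) \<in> grid_pts N - ?D.
           Ys (Suc m) a b = Ys m a b \<and> Ps (Suc m) a b = Ps m a b)"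
      using sch[unfolded schwarz_opt_def, THEN conjunct2, rule_format, of "Suc m"] by simp
    have "\<forall>(a,b)\<in>grid_pts N. (\<lambda>i j. E (Suc m) i j - W (Suc m) i j) a b \<le> 0"
    proof (rule maxprin[OF act])
      show "\<forall>(a,b)\<in>?D. lap5 N (\<lambda>i j. E (Suc m) i j - W (Suc m) i j) a b \<le> 0"
      proof clarify
        fix a b assume ab: "(a,b) \<in> ?D"
        then have ai: "(a,b) \<in> interior_pts N" using act by blast
        have "lap5 N (E (Suc m)) a b \<le> 0"
          unfolding E_def
          by (rule subharm[OF al]) (use opt ai schm ab in \<open>auto simp: optsys_def\<close>)
        then show "lap5 N (\<lambda>i j. E (Suc m) i j - W (Suc m) i j) a b \<le> 0"
        proof -
          have "lap5 N (W (Suc m)) a b = 0" using Hm ab by auto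
          then show ?thesis using \<open>lap5 N (E (Suc m)) a b \<le> 0\<close> by (simp add: lap5_diff)
        qed
      qed
      show "\<forall>(a,b)\<in>grid_pts N - ?D. (\<lambda>i j. E (Suc m) i j - W (Suc m) i j) a b \<le> 0"
      proof clarify
        fix a b assume ab: "(a,b) \<in> grid_pts N" "(a,b) \<notin> ?D"
        have "Ys (Suc m) a b = Ys m a b" "Ps (Suc m) a b = Ps m a b" using schm ab by auto
        then have "E (Suc m) a b = E m a b" unfolding E_def err_def by simp
        moreover have "W (Suc m) a b = W m a b" using Hm ab by auto
        moreover have "E m a b \<le> W m a b" using Suc.IH ab by auto
        ultimately show "E (Suc m) a b - W (Suc m) a b \<le> 0" by simp
      qed
    qed
    then show ?case by auto
  qed
  define M0 where "M0 = gmax N (E 0)"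
  have gm0: "gmaxnorm N (W 0) = M0"
  proof -
    have "(\<lambda>(a,b). \<bar>E 0 a b\<bar>) ` grid_pts N = (\<lambda>(a,b). E 0 a b) ` grid_pts N"
      using Enn by (intro image_cong) auto
    then show ?thesis unfolding W0 M0_def gmaxnorm_def gmax_def by simp
  qed
  have M0nn: "M0 \<ge> 0" using le_gmaxnorm[of 0 0 N "W 0"] gm0 by (simp add: grid_pts_def)
  have pt: "(1 / real N)^2 * E (2*k) a b \<le> (1 / real N)^2 * (\<rho>^k * M0)" if "(a,b) \<in> grid_pts N" for a b
  proof -
    have "E (2*k) a b \<le> W (2*k) a b" using cmp that by auto
    also have "\<dots> \<le> gmaxnorm N (W (2*k))" using le_gmaxnorm[OF that, of "W (2*k)"] by linarith
    also have "\<dots> \<le> \<rho>^k * M0" using rate gm0 by simp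
    finally show ?thesis by (intro mult_left_mono) auto
  qed
  have "(\<Sum>(a,b)\<in>grid_pts N. (1 / real N)^2 * E (2*k) a b) \<le> (\<Sum>(a,b)\<in>grid_pts N. (1 / real N)^2 * (\<rho>^k * M0))"
    by (rule sum_mono) (use pt in auto)
  also have "\<dots> = (real N + 1)^2 / (real N)^2 * (\<rho>^k * M0)"
    by (simp add: grid_card power_divide)
  also have "\<dots> \<le> 4 * (\<rho>^k * M0)"
  proof (rule mult_right_mono)
    have Np: "real N \<ge> 1" using N by simp
    have "real N + 1 \<le> 2 * real N" using Np by simp
    then have "(real N + 1)^2 \<le> (2 * real N)^2" by (rule power_mono) simp
    then have "(real N + 1)^2 \<le> 4 * (real N)^2" by (simp add: power_mult_distrib)
    then show "(real N + 1)^2 / (real N)^2 \<le> 4" using Np by (simp add: divide_le_eq)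
    show "0 \<le> \<rho>^k * M0" using rho M0nn by simp
  qed
  finally show ?thesis unfolding E_def M0_def by (simp add: mult.assoc)
qed

theorem corollary4p1:
  shows "\<exists>C>0. \<forall>(N::nat) O1 O2 (\<alpha>::real) F Yd Y P Ys Ps (\<rho>::real).
     N \<ge> 2 \<longrightarrow> admissible_decomp N O1 O2 \<longrightarrow> \<alpha> > 0 \<longrightarrow>
     optsys N \<alpha> F Yd Y P \<longrightarrow>
     schwarz_opt N O1 O2 \<alpha> F Yd Ys Ps \<longrightarrow>
     0 < \<rho> \<longrightarrow> \<rho> < 1 \<longrightarrow>
     (\<forall>W. schwarz_laplace N O1 O2 W \<longrightarrow>
        (\<forall>k\<ge>1. gmaxnorm N (W (2*k)) \<le> \<rho> * gmaxnorm N (W (2*(k-1))))) \<longrightarrow>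
     (\<forall>k\<ge>1. (\<Sum>(a,b)\<in>grid_pts N. (1 / real N)^2 * err N \<alpha> Y P (Ys (2*k)) (Ps (2*k)) a b)
              \<le> C * \<rho>^k * gmax N (err N \<alpha> Y P (Ys 0) (Ps 0)))"
  by (rule exI[of _ 4]) (auto intro: main)

end
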